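(* Let $A=(a_{n,k})$ be a real matrix with $a_{n,k}\ge0$ and $\sum_{k=0}^\infty a_{n,k}=1$ for every $n$, let $r\in\mathbb{N}$, $n\ge0$, and let $t\in\mathbb{R}$ with $t\neq\frac{2l\pi}{r}$ for all $l\in\mathbb{Z}$. Then $$\left|\sum_{k=0}^{\infty}a_{n,k}\widetilde{D^{\circ}}_{k,1}(t)\right|\le\frac{1}{2\left|\sin\frac t2\sin\frac{rt}2\right|}\left(A_{n,r}+\sum_{k=0}^{r-1}a_{n,k}\right)\le\frac{1}{\left|\sin\frac t2\sin\frac{rt}2\right|}A_{n,r}.$$
   Context: $\widetilde{D^{\circ}}_{k,1}(t)=\dfrac{\cos\frac{(2k+1)t}{2}}{2\sin\frac t2}$ and $A_{n,r}=\sum_{k=0}^\infty|a_{n,k}-a_{n,k+r}|$. *)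

theory Defs
  imports Complex_Main
begin

definition Dconj :: "nat \<Rightarrow> real \<Rightarrow> real" where
  "Dconj k t = cos ((2 * real k + 1) * t / 2) / (2 * sin (t / 2))"

definition Anr :: "(nat \<Rightarrow> nat \<Rightarrow> real) \<Rightarrow> nat \<Rightarrow> nat \<Rightarrow> real" where
  "Anr a n r = (\<Sum>k. \<bar>a n k - a n (k + r)\<bar>)"

end

theory Submission
  imports Defs
begin

lemma split_sum:
  fixes b :: "nat \<Rightarrow> real"
  shows "(\<Sum>k<N + r. b k) = (\<Sum>k<N. b k) + (\<Sum>k<r. b (N + k))"
  by (induction r) (simp_all add: add.assoc)

lemma shift_id:
  fixes b :: "nat \<Rightarrow> real"
  shows "(\<Sum>k<N. b k - b (k + r)) = (\<Sum>k<r. b k) - (\<Sum>k<r. b (N + k))"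
proof -
  have e1: "(\<Sum>k<N + r. b k) = (\<Sum>k<N. b k) + (\<Sum>k<r. b (N + k))"
    by (rule split_sum)
  have e2: "(\<Sum>k<r + N. b k) = (\<Sum>k<r. b k) + (\<Sum>k<N. b (r + k))"
    by (rule split_sum)
  show ?thesis using e1 e2 by (simp add: sum_subtractf add.commute)
qed


lemma initial_le:
  fixes b :: "nat \<Rightarrow> real"
  assumes nn: "\<And>k. b k \<ge> 0" and sb: "summable b"
  shows "summable (\<lambda>k. \<bar>b k - b (k + r)\<bar>)"
    and "(\<Sum>k<r. b k) \<le> (\<Sum>k. \<bar>b k - b (k + r)\<bar>)"
proof -
  have sr: "summable (\<lambda>k. b (k + r))" using sb by (rule summable_ignore_initial_segment)
  show sa: "summable (\<lambda>k. \<bar>b k - b (k + r)\<bar>)"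
  proof (rule summable_comparison_test[of _ "\<lambda>k. b k + b (k + r)"])
    show "\<exists>N. \<forall>n\<ge>N. norm \<bar>b n - b (n + r)\<bar> \<le> b n + b (n + r)"
    proof (intro exI allI impI)
      fix n :: nat
      have "0 \<le> b n" "0 \<le> b (n + r)" using nn by auto
      then show "norm \<bar>b n - b (n + r)\<bar> \<le> b n + b (n + r)" by simp
    qed
    show "summable (\<lambda>k. b k + b (k + r))" using sb sr by (rule summable_add)
  qed
  have b0: "b \<longlonglongrightarrow> 0" using sb by (rule summable_LIMSEQ_zero)
  have t0: "(\<lambda>N. \<Sum>k<r. b (N + k)) \<longlonglongrightarrow> 0"
  proof (rule tendsto_null_sum)
    fix k assume "k \<in> {..<r}"
    show "(\<lambda>N. b (N + k)) \<longlonglongrightarrow> 0"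
      using LIMSEQ_ignore_initial_segment[OF b0, of k] by simp
  qed
  have lim1: "(\<lambda>N. (\<Sum>k<N. b k - b (k + r)) + (\<Sum>k<r. b (N + k))) \<longlonglongrightarrow> (\<Sum>k<r. b k)"
    by (simp add: shift_id)
  have lim2: "(\<lambda>N. (\<Sum>k<N. \<bar>b k - b (k + r)\<bar>) + (\<Sum>k<r. b (N + k))) \<longlonglongrightarrow> (\<Sum>k. \<bar>b k - b (k + r)\<bar>) + 0"
    by (intro tendsto_add t0 summable_LIMSEQ[OF sa])
  show "(\<Sum>k<r. b k) \<le> (\<Sum>k. \<bar>b k - b (k + r)\<bar>)"
  proof (rule LIMSEQ_le[OF lim1])
    show "(\<lambda>N. (\<Sum>k<N. \<bar>b k - b (k + r)\<bar>) + (\<Sum>k<r. b (N + k))) \<longlonglongrightarrow> (\<Sum>k. \<bar>b k - b (k + r)\<bar>)"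
      using lim2 by simp
    show "\<exists>N. \<forall>n\<ge>N. (\<Sum>k<n. b k - b (k + r)) + (\<Sum>k<r. b (n + k)) \<le> (\<Sum>k<n. \<bar>b k - b (k + r)\<bar>) + (\<Sum>k<r. b (n + k))"
      by (auto intro!: sum_mono)
  qed
qed


theorem lemma5:
  fixes a :: "nat \<Rightarrow> nat \<Rightarrow> real" and r n :: nat and t :: real
  assumes nonneg: "\<And>n k. a n k \<ge> 0"
    and rowsum: "\<And>n. a n sums 1"
    and r_pos: "r \<ge> 1"
    and t_ok: "\<forall>l::int. t \<noteq> 2 * real_of_int l * pi / real r"
  shows "(\<bar>\<Sum>k. a n k * Dconj k t\<bar>
           \<le> 1 / (2 * \<bar>sin (t / 2) * sin (real r * t / 2)\<bar>) * (Anr a n r + (\<Sum>k<r. a n k))) \<and>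
         (1 / (2 * \<bar>sin (t / 2) * sin (real r * t / 2)\<bar>) * (Anr a n r + (\<Sum>k<r. a n k))
           \<le> 1 / \<bar>sin (t / 2) * sin (real r * t / 2)\<bar> * Anr a n r)"
proof -
  define b where "b = a n"
  define A where "A = Anr a n r"
  define B where "B = (\<Sum>k<r. b k)"
  define g where "g = (\<lambda>k::nat. sin ((2 * real k + 1 - real r) * t / 2))"
  define c where "c = (\<lambda>k::nat. cos ((2 * real k + 1) * t / 2))"
  define S where "S = (\<Sum>k. b k * c k)"
  have nn: "\<And>k. b k \<ge> 0" using nonneg by (simp add: b_def)
  have sb: "summable b" using rowsum[of n] by (auto simp: b_def sums_iff)
  have sa: "summable (\<lambda>k. \<bar>b k - b (k + r)\<bar>)" and BA: "B \<le> A"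
    using initial_le[OF nn sb, of r] by (auto simp: A_def B_def Anr_def b_def)
  have rpos: "real r > 0" using r_pos by simp
  have s1: "sin (t / 2) \<noteq> 0"
  proof
    assume "sin (t / 2) = 0"
    then obtain i :: int where "t / 2 = of_int i * pi" by (auto simp: sin_zero_iff_int2)
    then have "t = 2 * real_of_int (i * int r) * pi / real r" using rpos by (simp add: field_simps)
    then show False using t_ok by blast
  qed
  have s2: "sin (real r * t / 2) \<noteq> 0"
  proof
    assume "sin (real r * t / 2) = 0"
    then obtain i :: int where "real r * t / 2 = of_int i * pi" by (auto simp: sin_zero_iff_int2)
    then have "t = 2 * real_of_int i * pi / real r" using rpos by (simp add: field_simps)
    then show False using t_ok by blast
  qed
  have gb: "\<And>k. \<bar>g k\<bar> \<le> 1" by (simp add: g_def)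
  have cb: "\<And>k. \<bar>c k\<bar> \<le> 1" by (simp add: c_def)
  have sumc: "summable (\<lambda>k. b k * c k)"
  proof (rule summable_comparison_test[OF _ sb])
    show "\<exists>N. \<forall>k\<ge>N. norm (b k * c k) \<le> b k"
      using nn cb by (auto simp: abs_mult intro!: mult_left_le[of _ "b _", simplified] exI[of _ 0])
  qed
  have sumg: "summable (\<lambda>k. b k * g k)"
  proof (rule summable_comparison_test[OF _ sb])
    show "\<exists>N. \<forall>k\<ge>N. norm (b k * g k) \<le> b k"
      using nn gb by (auto simp: abs_mult intro!: mult_left_le[of _ "b _", simplified] exI[of _ 0])
  qed
  have sumgr: "summable (\<lambda>k. b k * g (k + r))"
  proof (rule summable_comparison_test[OF _ sb])
    show "\<exists>N. \<forall>k\<ge>N. norm (b k * g (k + r)) \<le> b k"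
      using nn gb by (auto simp: abs_mult intro!: mult_left_le[of _ "b _", simplified] exI[of _ 0])
  qed
  have sumd: "summable (\<lambda>k. (b k - b (k + r)) * g (k + r))"
  proof (rule summable_comparison_test[OF _ sa])
    show "\<exists>N. \<forall>k\<ge>N. norm ((b k - b (k + r)) * g (k + r)) \<le> \<bar>b k - b (k + r)\<bar>"
      using gb by (auto simp: abs_mult intro!: mult_left_le exI[of _ 0])
  qed
  have trig: "\<And>k. 2 * sin (real r * t / 2) * c k = g (k + r) - g k"
  proof -
    fix k
    have "g (k + r) - g k = 2 * sin (((2 * real (k + r) + 1 - real r) * t / 2 - (2 * real k + 1 - real r) * t / 2) / 2)
        * cos (((2 * real (k + r) + 1 - real r) * t / 2 + (2 * real k + 1 - real r) * t / 2) / 2)"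
      unfolding g_def by (rule sin_diff_sin)
    also have "\<dots> = 2 * sin (real r * t / 2) * c k"
    proof -
      have e1: "((2 * real (k + r) + 1 - real r) * t / 2 - (2 * real k + 1 - real r) * t / 2) / 2 = real r * t / 2"
        by (simp add: field_simps)
      have e2: "((2 * real (k + r) + 1 - real r) * t / 2 + (2 * real k + 1 - real r) * t / 2) / 2 = (2 * real k + 1) * t / 2"
        by (simp add: field_simps)
      show ?thesis unfolding e1 e2 c_def ..
    qed
    finally show "2 * sin (real r * t / 2) * c k = g (k + r) - g k" by simp
  qed
  have "2 * sin (real r * t / 2) * S = (\<Sum>k. b k * (2 * sin (real r * t / 2) * c k))"
    unfolding S_def using suminf_mult[OF sumc, of "2 * sin (real r * t / 2)"]
    by (simp add: algebra_simps)
  also have "\<dots> = (\<Sum>k. b k * g (k + r) - b k * g k)"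
    by (rule suminf_cong) (simp only: trig right_diff_distrib)
  also have "\<dots> = (\<Sum>k. b k * g (k + r)) - (\<Sum>k. b k * g k)"
    by (rule suminf_diff[OF sumgr sumg, symmetric])
  also have "(\<Sum>k. b k * g k) = (\<Sum>k. b (k + r) * g (k + r)) + (\<Sum>k<r. b k * g k)"
    using suminf_split_initial_segment[OF sumg, of r] by simp
  also have "(\<Sum>k. b k * g (k + r)) - ((\<Sum>k. b (k + r) * g (k + r)) + (\<Sum>k<r. b k * g k))
      = (\<Sum>k. (b k - b (k + r)) * g (k + r)) - (\<Sum>k<r. b k * g k)"
  proof -
    have s3: "summable (\<lambda>k. b (k + r) * g (k + r))"
      using summable_ignore_initial_segment[OF sumg, of r] by simp
    have "(\<Sum>k. (b k - b (k + r)) * g (k + r)) = (\<Sum>k. b k * g (k + r)) - (\<Sum>k. b (k + r) * g (k + r))"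
      using suminf_diff[OF sumgr s3] by (simp add: algebra_simps)
    then show ?thesis by simp
  qed
  finally have key: "2 * sin (real r * t / 2) * S = (\<Sum>k. (b k - b (k + r)) * g (k + r)) - (\<Sum>k<r. b k * g k)" .
  have b1: "\<bar>\<Sum>k. (b k - b (k + r)) * g (k + r)\<bar> \<le> A"
  proof -
    have sn: "summable (\<lambda>k. norm ((b k - b (k + r)) * g (k + r)))"
    proof (rule summable_comparison_test[OF _ sa])
      show "\<exists>N. \<forall>k\<ge>N. norm (norm ((b k - b (k + r)) * g (k + r))) \<le> \<bar>b k - b (k + r)\<bar>"
        using gb by (auto simp: abs_mult intro!: mult_left_le exI[of _ 0])
    qed
    have "\<bar>\<Sum>k. (b k - b (k + r)) * g (k + r)\<bar> \<le> (\<Sum>k. norm ((b k - b (k + r)) * g (k + r)))"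
      using summable_norm[OF sn] by simp
    also have "\<dots> \<le> (\<Sum>k. \<bar>b k - b (k + r)\<bar>)"
      by (rule suminf_le[OF _ sn sa]) (use gb in \<open>auto simp: abs_mult intro!: mult_left_le\<close>)
    finally show ?thesis by (simp add: A_def Anr_def b_def)
  qed
  have b2: "\<bar>\<Sum>k<r. b k * g k\<bar> \<le> B"
  proof -
    have "\<bar>\<Sum>k<r. b k * g k\<bar> \<le> (\<Sum>k<r. \<bar>b k * g k\<bar>)" by (rule sum_abs)
    also have "\<dots> \<le> B" unfolding B_def
      by (rule sum_mono) (use nn gb in \<open>auto simp: abs_mult intro!: mult_left_le[of _ "b _", simplified]\<close>)
    finally show ?thesis .
  qed
  have SS: "2 * \<bar>sin (real r * t / 2)\<bar> * \<bar>S\<bar> \<le> A + B"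
  proof -
    have "2 * \<bar>sin (real r * t / 2)\<bar> * \<bar>S\<bar> = \<bar>2 * sin (real r * t / 2) * S\<bar>" by (simp add: abs_mult)
    also have "\<dots> \<le> A + B" unfolding key using b1 b2 by linarith
    finally show ?thesis .
  qed
  have D: "(\<Sum>k. a n k * Dconj k t) = S / (2 * sin (t / 2))"
    unfolding S_def Dconj_def b_def c_def
    using suminf_divide[OF sumc[unfolded b_def c_def], of "2 * sin (t / 2)"] by simp
  define p where "p = \<bar>sin (t / 2)\<bar>"
  define q where "q = \<bar>sin (real r * t / 2)\<bar>"
  have pp: "p > 0" using s1 by (simp add: p_def)
  have qp: "q > 0" using s2 by (simp add: q_def)
  have A0: "A \<ge> 0" using BA nn unfolding B_def by (meson order_trans sum_nonneg)
  have "\<bar>S / (2 * sin (t / 2))\<bar> = \<bar>S\<bar> / (2 * p)" by (simp add: p_def abs_mult)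
  also have "\<dots> \<le> (A + B) / (2 * q) / (2 * p)"
    using SS qp pp by (intro divide_right_mono) (simp_all add: q_def field_simps)
  also have "\<dots> \<le> 1 / (2 * (p * q)) * (A + B)"
  proof -
    have B0: "B \<ge> 0" unfolding B_def using nn by (simp add: sum_nonneg)
    have "0 \<le> (A + B) * (p * q)" using A0 B0 pp qp by simp
    then show ?thesis using pp qp by (simp add: field_simps)
  qed
  finally have G1: "\<bar>S / (2 * sin (t / 2))\<bar> \<le> 1 / (2 * (p * q)) * (A + B)" .
  have G2: "1 / (2 * (p * q)) * (A + B) \<le> 1 / (p * q) * A"
    using pp qp BA by (simp add: field_simps)
  show ?thesis
    using G1 G2 D unfolding A_def B_def b_def p_def q_def by (simp add: abs_mult)
qed

end
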